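(* Let $\psi$ be the morphism on $\{a,b,c\}$ given by $\psi(a)=aabc$, $\psi(b)=bacaaabc$, $\psi(c)=bacabacabaca$. Then the infinite fixed points $\lim_n\psi^n(a)$ and $\lim_n\psi^n(b)$ of $\psi$ are $7$-automatic.
   Context: For an integer $q\ge 2$, a sequence is $q$-automatic if it is the image under a letter-to-letter map of a fixed point of a morphism all of whose letter-images have length $q$. *)

theory Defs
  imports Main
begin

datatype letter = A | B | C

definition morph_word :: "('a \<Rightarrow> 'a list) \<Rightarrow> 'a list \<Rightarrow> 'a list" where
  "morph_word h u = concat (map h u)"

fun psi :: "letter \<Rightarrow> letter list" where
  "psi A = [A,A,B,C]"
| "psi B = [B,A,C,A,A,A,B,C]"
| "psi C = [B,A,C,A,B,A,C,A,B,A,C,A]"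

definition is_limit_word :: "('a \<Rightarrow> 'a list) \<Rightarrow> 'a \<Rightarrow> (nat \<Rightarrow> 'a) \<Rightarrow> bool" where
  "is_limit_word h x w \<longleftrightarrow>
     (\<forall>n i. i < length ((morph_word h ^^ n) [x]) \<longrightarrow> w i = ((morph_word h ^^ n) [x]) ! i)
     \<and> (\<forall>N. \<exists>n. N < length ((morph_word h ^^ n) [x]))"

text \<open>q-automatic: image under a coding of a fixed point of a q-uniform morphism
  on a finite alphabet (letters coded as natural numbers).  For a q-uniform morphism h,
  the infinite word x is a fixed point (h(x) = x) iff x i = h (x (i div q)) ! (i mod q).\<close>
definition q_automatic :: "nat \<Rightarrow> (nat \<Rightarrow> 'b) \<Rightarrow> bool" where
  "q_automatic q w \<longleftrightarrow>
     (\<exists>(Sig :: nat set) (h :: nat \<Rightarrow> nat list) (x :: nat \<Rightarrow> nat) (tau :: nat \<Rightarrow> 'b).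
        finite Sig
        \<and> (\<forall>s\<in>Sig. length (h s) = q \<and> set (h s) \<subseteq> Sig)
        \<and> (\<forall>i. x i \<in> Sig)
        \<and> (\<forall>i. x i = h (x (i div q)) ! (i mod q))
        \<and> (\<forall>i. w i = tau (x i)))"

end

theory Submission
  imports Defs
begin

fun gg :: "nat \<Rightarrow> nat list" where
  "gg n = (if n = 0 then [0,0,1,0,1,1,1] else [1,0,0,1,1,1,0])"

fun blk :: "nat \<Rightarrow> letter list" where
  "blk n = (if n = 0 then [A,A,B,C] else [B,A,C,A])"

fun enc1 :: "letter \<Rightarrow> nat list" where
  "enc1 A = [0]" | "enc1 B = [1,0]" | "enc1 C = [1,1,1]"

definition dec :: "nat list \<Rightarrow> letter list" where
  "dec v = concat (map blk v)"

definition GG :: "nat list \<Rightarrow> nat list" where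
  "GG v = concat (map gg v)"

lemma nth_concat_uniform:
  assumes "\<forall>y\<in>set v. length (f y) = q" "k < q * length v"
  shows "concat (map f v) ! k = f (v ! (k div q)) ! (k mod q)"
  using assms
proof (induction v arbitrary: k)
  case Nil thus ?case by simp
next
  case (Cons a v)
  have q: "length (f a) = q" using Cons.prems by simp
  have qpos: "q > 0" using Cons.prems(2) by (cases q) auto
  show ?case
  proof (cases "k < q")
    case True thus ?thesis using q by (simp add: nth_append)
  next
    case False
    then have kq: "k - q < q * length v" using Cons.prems(2) by simp
    from Cons.IH[of "k-q"] kq Cons.prems(1)
    have h: "concat (map f v) ! (k-q) = f (v ! ((k-q) div q)) ! ((k-q) mod q)" by simp
    have d: "k div q = Suc ((k-q) div q)" using False qpos
      by (simp add: le_div_geq)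
    have m: "k mod q = (k-q) mod q" using False by (simp add: le_mod_geq)
    show ?thesis using h d m q False by (simp add: nth_append)
  qed
qed

lemma len_gg: "length (gg n) = 7" by simp
lemma len_blk: "length (blk n) = 4" by simp
lemma set_gg: "set (gg n) \<subseteq> {0,1}" by auto

lemma len_GG: "length (GG v) = 7 * length v"
  by (induction v) (auto simp: GG_def)

lemma len_dec: "length (dec v) = 4 * length v"
  by (induction v) (auto simp: dec_def)

lemma GG_append: "GG (u @ t) = GG u @ GG t" by (simp add: GG_def)
lemma dec_append: "dec (u @ t) = dec u @ dec t" by (simp add: dec_def)

lemma GGn_append: "(GG ^^ n) (u @ t) = (GG ^^ n) u @ (GG ^^ n) t"
  by (induction n) (auto simp: GG_append)

lemma len_GGn: "length ((GG ^^ n) v) = 7 ^ n * length v"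
  by (induction n) (auto simp: len_GG)

lemma psi_dec: "morph_word psi (dec v) = dec (GG v)"
proof (induction v)
  case Nil thus ?case by (simp add: morph_word_def dec_def GG_def)
next
  case (Cons a v)
  have "morph_word psi (dec (a # v)) = morph_word psi (blk a) @ morph_word psi (dec v)"
    by (simp add: morph_word_def dec_def)
  moreover have "morph_word psi (blk a) = dec (gg a)"
    by (simp add: morph_word_def dec_def)
  moreover have "dec (GG (a # v)) = dec (gg a) @ dec (GG v)"
    by (simp add: GG_def dec_def)
  ultimately show ?case using Cons by simp
qed

lemma psin_dec: "(morph_word psi ^^ n) (dec v) = dec ((GG ^^ n) v)"
  by (induction n) (auto simp: psi_dec)

lemma psi_single: "morph_word psi [x] = dec (enc1 x)"
  by (cases x) (simp_all add: morph_word_def dec_def)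

lemma psiSn: "(morph_word psi ^^ Suc n) [x] = dec ((GG ^^ n) (enc1 x))"
proof -
  have "(morph_word psi ^^ Suc n) [x] = (morph_word psi ^^ n) (morph_word psi [x])"
    by (simp only: funpow_Suc_right comp_def)
  thus ?thesis by (simp only: psi_single psin_dec)
qed

lemma GG_prefix:
  assumes "hd (gg s) = s"
  shows "\<exists>t. (GG ^^ Suc n) [s] = (GG ^^ n) [s] @ t"
proof (induction n)
  case 0
  have ne: "gg s \<noteq> []" by simp
  have "gg s = s # tl (gg s)" using assms ne by (metis list.collapse)
  thus ?case by (auto simp: GG_def)
next
  case (Suc n)
  then obtain t where t: "(GG ^^ Suc n) [s] = (GG ^^ n) [s] @ t" by blast
  have "(GG ^^ Suc (Suc n)) [s] = GG ((GG ^^ Suc n) [s])" by simp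
  also have "\<dots> = GG ((GG ^^ n) [s]) @ GG t" using t by (simp add: GG_append)
  finally show ?case by auto
qed

lemma GG_prefix_le:
  assumes "hd (gg s) = s" "n \<le> m"
  shows "\<exists>t. (GG ^^ m) [s] = (GG ^^ n) [s] @ t"
  using assms(2)
proof (induction m rule: dec_induct)
  case base thus ?case by auto
next
  case (step m)
  then obtain t where t: "(GG ^^ m) [s] = (GG ^^ n) [s] @ t" by blast
  obtain t' where "(GG ^^ Suc m) [s] = (GG ^^ m) [s] @ t'" using GG_prefix[OF assms(1)] by blast
  then show ?case using t by auto
qed

lemma GG_nth_consistent:
  assumes "hd (gg s) = s" "k < 7 ^ n" "k < 7 ^ m"
  shows "(GG ^^ n) [s] ! k = (GG ^^ m) [s] ! k"
proof -
  have "\<And>a b. a \<le> b \<Longrightarrow> k < 7 ^ a \<Longrightarrow> (GG ^^ a) [s] ! k = (GG ^^ b) [s] ! k"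
  proof -
    fix a b :: nat assume ab: "a \<le> b" and ka: "k < 7 ^ a"
    obtain t where "(GG ^^ b) [s] = (GG ^^ a) [s] @ t" using GG_prefix_le[OF assms(1) ab] by blast
    thus "(GG ^^ a) [s] ! k = (GG ^^ b) [s] ! k" using ka by (simp add: nth_append len_GGn)
  qed
  thus ?thesis using assms by (cases "n \<le> m") (metis nat_le_linear)+
qed

definition VV :: "nat \<Rightarrow> nat \<Rightarrow> nat" where
  "VV s k = (GG ^^ k) [s] ! k"

lemma k_lt_pow: "k < (7::nat) ^ k"
  by (induction k) auto

lemma VV_eq:
  assumes "hd (gg s) = s" "k < 7 ^ n"
  shows "(GG ^^ n) [s] ! k = VV s k"
  unfolding VV_def using GG_nth_consistent[OF assms(1) assms(2) k_lt_pow] .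

lemma VV_step:
  assumes "hd (gg s) = s"
  shows "VV s k = gg (VV s (k div 7)) ! (k mod 7)"
proof -
  have "VV s k = (GG ^^ Suc k) [s] ! k"
    using VV_eq[OF assms, of k "Suc k"] k_lt_pow[of k] by simp
  also have "\<dots> = gg ((GG ^^ k) [s] ! (k div 7)) ! (k mod 7)"
  proof -
    have "(GG ^^ Suc k) [s] ! k = GG ((GG ^^ k) [s]) ! k" by simp
    also have "\<dots> = gg ((GG ^^ k) [s] ! (k div 7)) ! (k mod 7)"
      unfolding GG_def[of "(GG ^^ k) [s]"] by (rule nth_concat_uniform) (use k_lt_pow[of k] in \<open>simp_all add: len_GGn\<close>)
    finally show ?thesis .
  qed
  also have "(GG ^^ k) [s] ! (k div 7) = VV s (k div 7)"
    by (rule VV_eq[OF assms]) (meson div_le_dividend k_lt_pow le_less_trans)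
  finally show ?thesis .
qed

lemma VV_range:
  assumes "hd (gg s) = s"
  shows "VV s k \<le> 1"
proof -
  have "gg (VV s (k div 7)) ! (k mod 7) \<in> set (gg (VV s (k div 7)))"
  proof (rule nth_mem)
    show "k mod 7 < length (gg (VV s (k div 7)))" by (simp del: gg.simps add: len_gg)
  qed
  thus ?thesis using VV_step[OF assms, of k] set_gg by fastforce
qed

lemma w_eq:
  assumes lim: "is_limit_word psi x w" and s: "hd (enc1 x) = s" "hd (gg s) = s"
    and nA: "x \<noteq> C"
  shows "w i = blk (VV s (i div 4)) ! (i mod 4)"
proof -
  obtain rest where er: "enc1 x = s # rest" using s(1) nA by (cases x) auto
  have L: "(morph_word psi ^^ Suc i) [x] = dec ((GG ^^ i) [s]) @ dec ((GG ^^ i) rest)"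
    by (simp only: psiSn er) (metis GGn_append append_Cons append_Nil dec_append)
  have li: "i < length (dec ((GG ^^ i) [s]))"
    using k_lt_pow[of i] by (simp add: len_dec len_GGn)
  have li2: "i < length ((morph_word psi ^^ Suc i) [x])" using li L by simp
  have "w i = (morph_word psi ^^ Suc i) [x] ! i"
    using lim li2 unfolding is_limit_word_def by blast
  also have "\<dots> = dec ((GG ^^ i) [s]) ! i" using L li by (simp add: nth_append)
  also have "\<dots> = blk ((GG ^^ i) [s] ! (i div 4)) ! (i mod 4)"
    unfolding dec_def by (rule nth_concat_uniform) (use li in \<open>auto simp: len_dec\<close>)
  also have "(GG ^^ i) [s] ! (i div 4) = VV s (i div 4)"
    by (rule VV_eq[OF s(2)]) (meson div_le_dividend k_lt_pow le_less_trans)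
  finally show ?thesis .
qed

definition hh :: "nat \<Rightarrow> nat list" where
  "hh n = map (\<lambda>d. 4 * (gg (n div 4) ! ((7 * (n mod 4) + d) div 4)) + (7 * (n mod 4) + d) mod 4) [0..<7]"

lemma auto7:
  assumes s: "hd (gg s) = s"
    and weq: "\<And>i. w i = blk (VV s (i div 4)) ! (i mod 4)"
  shows "q_automatic 7 w"
  unfolding q_automatic_def
proof (intro exI conjI)
  let ?x = "\<lambda>i. 4 * VV s (i div 4) + i mod 4"
  show "finite {..<8::nat}" by simp
  show "\<forall>n\<in>{..<8::nat}. length (hh n) = 7 \<and> set (hh n) \<subseteq> {..<8}"
  proof
    fix n :: nat
    have g1: "\<And>e. e < 7 \<Longrightarrow> gg (n div 4) ! e \<le> 1"
    proof -
      fix e :: nat assume "e < 7"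
      then have "gg (n div 4) ! e \<in> set (gg (n div 4))" by (intro nth_mem) simp
      then show "gg (n div 4) ! e \<le> 1" using set_gg by fastforce
    qed
    have "\<And>d. d < 7 \<Longrightarrow> 4 * (gg (n div 4) ! ((7 * (n mod 4) + d) div 4)) + (7 * (n mod 4) + d) mod 4 < 8"
    proof -
      fix d :: nat assume d: "d < 7"
      have "n mod 4 < 4" by simp
      then have "7 * (n mod 4) + d < 7 * 4" using d by linarith
      then have "(7 * (n mod 4) + d) div 4 < 7" by (rule less_mult_imp_div_less)
      then have "gg (n div 4) ! ((7 * (n mod 4) + d) div 4) \<le> 1" by (rule g1)
      moreover have "(7 * (n mod 4) + d) mod 4 < 4" by simp
      ultimately show "4 * (gg (n div 4) ! ((7 * (n mod 4) + d) div 4)) + (7 * (n mod 4) + d) mod 4 < 8" by linarith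
    qed
    thus "length (hh n) = 7 \<and> set (hh n) \<subseteq> {..<8}" by (auto simp: hh_def)
  qed
  show "\<forall>i. ?x i \<in> {..<8}"
  proof
    fix i :: nat
    have "VV s (i div 4) \<le> 1" by (rule VV_range[OF s])
    moreover have "i mod 4 < 4" by simp
    ultimately show "?x i \<in> {..<8}" by simp
  qed
  show "\<forall>i. ?x i = hh (?x (i div 7)) ! (i mod 7)"
  proof
    fix i :: nat
    define j where "j = i div 7"
    define d where "d = i mod 7"
    define K where "K = j div 4"
    define r where "r = j mod 4"
    define e where "e = (7 * r + d) div 4"
    have r4: "r < 4" unfolding r_def by simp
    have d7: "d < 7" unfolding d_def by simp
    have "7 * r + d < 7 * 4" using r4 d7 by linarith
    then have e7: "e < 7" unfolding e_def by (rule less_mult_imp_div_less)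
    have jj: "j = 4 * K + r" unfolding K_def r_def by simp
    have ii: "i = 7 * j + d" unfolding j_def d_def by simp
    have i_eq: "i = 4 * (7 * K) + (7 * r + d)" using ii jj by simp
    have idiv: "i div 4 = 7 * K + e" unfolding e_def i_eq by simp
    have i_eq2: "i = (7 * r + d) + (7 * K) * 4" using i_eq by simp
    have imod: "i mod 4 = (7 * r + d) mod 4" unfolding i_eq2 by (rule mod_mult_self1)
    have VK: "VV s (7 * K + e) = gg (VV s K) ! e"
      using VV_step[OF s, of "7*K+e"] e7 by simp
    have xj_div: "?x j div 4 = VV s K" unfolding K_def by simp
    have xj_mod: "?x j mod 4 = r" unfolding r_def by simp
    have "hh (?x j) ! d = 4 * (gg (VV s K) ! e) + (7 * r + d) mod 4"
      unfolding hh_def using d7 xj_div xj_mod e_def by simp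
    also have "\<dots> = ?x i" using idiv imod VK by simp
    finally show "?x i = hh (?x (i div 7)) ! (i mod 7)" unfolding j_def d_def by simp
  qed
  show "\<forall>i. w i = (\<lambda>n. blk (n div 4) ! (n mod 4)) (?x i)"
    using weq by simp
qed

theorem mainTheorem5:
  shows "(\<forall>w. is_limit_word psi A w \<longrightarrow> q_automatic 7 w)
       \<and> (\<forall>w. is_limit_word psi B w \<longrightarrow> q_automatic 7 w)"
proof (intro conjI allI impI)
  fix w assume "is_limit_word psi A w"
  from w_eq[OF this, of 0] show "q_automatic 7 w" by (intro auto7[of 0]) auto
next
  fix w assume "is_limit_word psi B w"
  from w_eq[OF this, of 1] show "q_automatic 7 w" by (intro auto7[of 1]) auto
qed

end
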